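(* Let $b_1,b_2,b_3\in\mathbb R$, not all zero, with $b_1+b_2+b_3=0$. Set \[a_1=\tfrac1{\sqrt3}(b_3-b_2),\quad a_2=\tfrac1{\sqrt3}(b_1-b_3),\quad a_3=\tfrac1{\sqrt3}(b_2-b_1).\] Let $w_1,w_2,w_3:\mathbb R\to\mathbb C\setminus\{0\}$ be differentiable functions satisfying, for all $t$, \[\frac{dw_1}{dt}=a_1\overline{w_2w_3},\quad\frac{dw_2}{dt}=a_2\overline{w_3w_1},\quad\frac{dw_3}{dt}=a_3\overline{w_1w_2},\] \[|w_1|^2+|w_2|^2+|w_3|^2=3,\qquad b_1|w_1|^2+b_2|w_2|^2+b_3|w_3|^2=0.\] Define $\Phi:\mathbb R^2\to\mathcal S^5$ by \[\Phi(s,t)=\tfrac1{\sqrt3}\bigl(e^{ib_1s}w_1(t),e^{ib_2s}w_2(t),e^{ib_3s}w_3(t)\bigr).\] Then $\Phi$ is a conformal harmonic map.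
   Context: $\mathcal S^5$ is the unit sphere in $\mathbb C^3$ with the round metric. Conformal means that $\partial\Phi/\partial s$ and $\partial\Phi/\partial t$ are orthogonal and of equal length at every point. *)

theory Defs
  imports "HOL-Analysis.Analysis"
begin

text \<open>Maps R^2 -> C^3 are written curried, Phi s t.  C^3 = complex^3 carries the
real inner product Re <u,v> (the round/Euclidean metric of R^6).\<close>

definition has_partials ::
  "(real \<Rightarrow> real \<Rightarrow> complex^3) \<Rightarrow> (real \<Rightarrow> real \<Rightarrow> complex^3) \<Rightarrow> (real \<Rightarrow> real \<Rightarrow> complex^3) \<Rightarrow> bool"
where "has_partials F Fs Ft \<longleftrightarrow>
   (\<forall>s t. ((\<lambda>s'. F s' t) has_vector_derivative Fs s t) (at s) \<and>
          ((\<lambda>t'. F s t') has_vector_derivative Ft s t) (at t))"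

definition conformal_map :: "(real \<Rightarrow> real \<Rightarrow> complex^3) \<Rightarrow> bool" where
  "conformal_map F \<longleftrightarrow> (\<exists>Fs Ft. has_partials F Fs Ft \<and>
     (\<forall>s t. inner (Fs s t) (Ft s t) = 0 \<and> norm (Fs s t) = norm (Ft s t)))"

text \<open>Harmonic map R^2 -> S^5 (C^2 map into the unit sphere whose tension field,
the tangential part of the Laplacian, vanishes).\<close>
definition harmonic_map_S5 :: "(real \<Rightarrow> real \<Rightarrow> complex^3) \<Rightarrow> bool" where
  "harmonic_map_S5 F \<longleftrightarrow> (\<forall>s t. norm (F s t) = 1) \<and>
   (\<exists>Fs Ft Fss Fst Fts Ftt. has_partials F Fs Ft \<and> has_partials Fs Fss Fst \<and> has_partials Ft Fts Ftt \<and>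
      continuous_on UNIV (\<lambda>(s,t). Fs s t) \<and> continuous_on UNIV (\<lambda>(s,t). Ft s t) \<and>
      continuous_on UNIV (\<lambda>(s,t). Fss s t) \<and> continuous_on UNIV (\<lambda>(s,t). Fst s t) \<and>
      continuous_on UNIV (\<lambda>(s,t). Fts s t) \<and> continuous_on UNIV (\<lambda>(s,t). Ftt s t) \<and>
      (\<forall>s t. let L = Fss s t + Ftt s t in L - inner L (F s t) *\<^sub>R F s t = 0))"

end

theory Submission imports Defs begin

definition Lk :: "3 \<Rightarrow> complex \<Rightarrow> complex^3" where "Lk k z = (\<chi> i. if i = k then z else 0)"

lemma Lk_bl: "bounded_linear (Lk k)"
proof -
  have "linear (Lk k)" by (rule linearI) (auto simp: Lk_def vec_eq_iff)
  then show ?thesis by (simp add: linear_conv_bounded_linear)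
qed

lemma vec3_eq: "(vector [x,y,z] :: complex^3) = Lk 1 x + Lk 2 y + Lk 3 z"
  unfolding vec_eq_iff forall_3 Lk_def by simp

lemma vec3_deriv:
  assumes "(f1 has_vector_derivative d1) F" "(f2 has_vector_derivative d2) F" "(f3 has_vector_derivative d3) F"
  shows "((\<lambda>x. vector [f1 x, f2 x, f3 x] :: complex^3) has_vector_derivative vector [d1,d2,d3]) F"
  unfolding vec3_eq
  by (intro has_vector_derivative_add bounded_linear.has_vector_derivative[OF Lk_bl] assms)

lemma vec3_cont:
  assumes "continuous_on S f1" "continuous_on S f2" "continuous_on S f3"
  shows "continuous_on S (\<lambda>x. vector [f1 x, f2 x, f3 x] :: complex^3)"
  unfolding vec3_eq
  by (intro continuous_on_add linear_continuous_on[OF Lk_bl] continuous_on_compose2[OF linear_continuous_on[OF Lk_bl] assms(1)]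
     continuous_on_compose2[OF linear_continuous_on[OF Lk_bl] assms(2)] continuous_on_compose2[OF linear_continuous_on[OF Lk_bl] assms(3)]) auto

lemma exp_deriv: "((\<lambda>s. exp (\<i> * complex_of_real (b * s))) has_vector_derivative (\<i> * of_real b * exp (\<i> * complex_of_real (b * s)))) (at s)"
proof -
  have "((\<lambda>z. exp (\<i> * of_real b * z)) has_field_derivative (exp (\<i> * of_real b * of_real s) * (\<i> * of_real b))) (at (of_real s))"
    by (auto intro!: derivative_eq_intros)
  from has_vector_derivative_real_field[OF this] show ?thesis
    by (simp add: mult.assoc mult.commute mult.left_commute)
qed

lemma inner_cplx: "inner (x::complex) y = Re (cnj x * y)"
  by (simp add: inner_complex_def)

lemma inner_vec3: "inner (vector [x1,x2,x3] :: complex^3) (vector [y1,y2,y3]) = Re (cnj x1 * y1) + Re (cnj x2 * y2) + Re (cnj x3 * y3)"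
  by (simp add: inner_vec_def sum_3 inner_cplx)

lemma norm_vec3_sq: "(norm (vector [x1,x2,x3] :: complex^3))\<^sup>2 = (cmod x1)\<^sup>2 + (cmod x2)\<^sup>2 + (cmod x3)\<^sup>2"
  by (simp add: norm_vec_def L2_set_def sum_3 sum_nonneg)


lemma dcont: "(\<And>t. (f has_vector_derivative D t) (at t)) \<Longrightarrow> continuous_on UNIV (f::real\<Rightarrow>complex)"
  by (intro continuous_at_imp_continuous_on ballI) (rule has_vector_derivative_continuous, blast)

lemma csnd: "continuous_on UNIV (f::real\<Rightarrow>complex) \<Longrightarrow> continuous_on UNIV (\<lambda>p::real\<times>real. f (snd p))"
  by (rule continuous_on_compose2[OF _ continuous_on_snd]) auto

lemma cfst: "continuous_on UNIV (f::real\<Rightarrow>complex) \<Longrightarrow> continuous_on UNIV (\<lambda>p::real\<times>real. f (fst p))"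
  by (rule continuous_on_compose2[OF _ continuous_on_fst]) auto

lemma c13: "complex_of_real (1/sqrt 3) * complex_of_real (1/sqrt 3) = 1/3"
  by (simp flip: of_real_mult)

lemma cEE: "cmod E = 1 \<Longrightarrow> cnj E * E = 1"
  using complex_norm_square[of E] by (simp add: mult.commute)

lemma t1: "cmod E = 1 \<Longrightarrow> cnj (complex_of_real (1/sqrt 3) * (\<i> * of_real b * E) * w) * (complex_of_real (1/sqrt 3) * E * d)
   = - \<i> * of_real b * (cnj w * d) / 3"
proof -
  assume "cmod E = 1"
  then have h: "cnj E * E = 1" by (rule cEE)
  have "cnj (complex_of_real (1/sqrt 3) * (\<i> * of_real b * E) * w) * (complex_of_real (1/sqrt 3) * E * d)
     = (complex_of_real (1/sqrt 3) * complex_of_real (1/sqrt 3)) * (cnj E * E) * (- \<i> * of_real b * (cnj w * d))"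
    by (simp add: algebra_simps)
  also have "\<dots> = (1/3) * 1 * (- \<i> * of_real b * (cnj w * d))" by (simp only: c13 h)
  also have "\<dots> = - \<i> * of_real b * (cnj w * d) / 3" by simp
  finally show ?thesis .
qed

lemma c13n: "(cmod (complex_of_real (1/sqrt 3)))^2 = 1/3"
  by (simp only: norm_of_real) (simp add: power_divide)

lemma n1: "cmod E = 1 \<Longrightarrow> (cmod (complex_of_real (1/sqrt 3) * (\<i> * of_real b * E) * w))\<^sup>2 = b^2 * (cmod w)^2 / 3"
  by (simp only: norm_mult power_mult_distrib c13n) simp

lemma n2: "cmod E = 1 \<Longrightarrow> (cmod (complex_of_real (1/sqrt 3) * E * w))\<^sup>2 = (cmod w)^2 / 3"
  by (simp only: norm_mult power_mult_distrib c13n) simp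

lemma alg1: fixes X1 X2 X3 b1 b2 b3 :: real
  assumes "X1+X2+X3=3" "b1*X1+b2*X2+b3*X3=0"
  shows "3*(b1^2*X1+b2^2*X2+b3^2*X3) = (b3-b2)^2*X2*X3 + (b1-b3)^2*X3*X1 + (b2-b1)^2*X1*X2"
proof -
  have "3*(b1^2*X1+b2^2*X2+b3^2*X3) - ((b3-b2)^2*X2*X3 + (b1-b3)^2*X3*X1 + (b2-b1)^2*X1*X2)
    = (3-(X1+X2+X3))*(b1^2*X1+b2^2*X2+b3^2*X3) + (b1*X1+b2*X2+b3*X3)^2"
    by (simp add: algebra_simps power2_eq_square)
  then show ?thesis using assms by simp
qed
lemma alg2: fixes X1 X2 X3 b1 b2 b3 a1 a2 a3 r :: real
  assumes "X1+X2+X3=3" "b1*X1+b2*X2+b3*X3=0" "b1+b2+b3=0" "r*r=3" "r*a1 = b3-b2" "r*a2=b1-b3" "r*a3=b2-b1"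
  shows "a1*(a2*X3+a3*X2) - b1^2 = a2*(a3*X1+a1*X3) - b2^2 \<and> a1*(a2*X3+a3*X2) - b1^2 = a3*(a1*X2+a2*X1) - b3^2"
proof -
  have p: "3*(ai*aj) = (r*ai)*(r*aj)" for ai aj using assms(4) by (simp add: algebra_simps)
  have b3: "b3 = -b1-b2" using assms(3) by simp
  have q12: "3*(a1*a2) = (b3-b2)*(b1-b3)" using p[of a1 a2] assms(5,6) by simp
  have q13: "3*(a1*a3) = (b3-b2)*(b2-b1)" using p[of a1 a3] assms(5,7) by simp
  have q23: "3*(a2*a3) = (b1-b3)*(b2-b1)" using p[of a2 a3] assms(6,7) by simp
  have k1: "3*(a1*(a2*X3+a3*X2) - b1^2) = (b3-b2)*(b1-b3)*X3 + (b3-b2)*(b2-b1)*X2 - 3*b1^2"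
  proof -
    have "3*(a1*(a2*X3+a3*X2) - b1^2) = 3*(a1*a2)*X3 + 3*(a1*a3)*X2 - 3*b1^2" by (simp add: algebra_simps)
    then show ?thesis unfolding q12 q13 .
  qed
  have k2: "3*(a2*(a3*X1+a1*X3) - b2^2) = (b1-b3)*(b2-b1)*X1 + (b1-b3)*(b3-b2)*X3 - 3*b2^2"
  proof -
    have "3*(a2*(a3*X1+a1*X3) - b2^2) = 3*(a2*a3)*X1 + 3*(a1*a2)*X3 - 3*b2^2" by (simp add: algebra_simps)
    then show ?thesis unfolding q12 q23 by (simp add: algebra_simps)
  qed
  have k3: "3*(a3*(a1*X2+a2*X1) - b3^2) = (b2-b1)*(b3-b2)*X2 + (b2-b1)*(b1-b3)*X1 - 3*b3^2"
  proof -
    have "3*(a3*(a1*X2+a2*X1) - b3^2) = 3*(a1*a3)*X2 + 3*(a2*a3)*X1 - 3*b3^2" by (simp add: algebra_simps)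
    then show ?thesis unfolding q13 q23 by (simp add: algebra_simps)
  qed
  have e12: "((b3-b2)*(b1-b3)*X3 + (b3-b2)*(b2-b1)*X2 - 3*b1^2) - ((b1-b3)*(b2-b1)*X1 + (b1-b3)*(b3-b2)*X3 - 3*b2^2)
     = (b1-b2)*(b1*X1+b2*X2+b3*X3) + ((X1+X2+X3)-3)*(b1^2-b2^2)"
    unfolding b3 by (simp add: algebra_simps power2_eq_square)
  have e13: "((b3-b2)*(b1-b3)*X3 + (b3-b2)*(b2-b1)*X2 - 3*b1^2) - ((b2-b1)*(b3-b2)*X2 + (b2-b1)*(b1-b3)*X1 - 3*b3^2)
     = (b1-b3)*(b1*X1+b2*X2+b3*X3) + ((X1+X2+X3)-3)*(b1^2-b3^2)"
    unfolding b3 by (simp add: algebra_simps power2_eq_square)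
  have z12: "((b3-b2)*(b1-b3)*X3 + (b3-b2)*(b2-b1)*X2 - 3*b1^2) - ((b1-b3)*(b2-b1)*X1 + (b1-b3)*(b3-b2)*X3 - 3*b2^2) = 0"
    using e12 assms(1,2) by simp
  have z13: "((b3-b2)*(b1-b3)*X3 + (b3-b2)*(b2-b1)*X2 - 3*b1^2) - ((b2-b1)*(b3-b2)*X2 + (b2-b1)*(b1-b3)*X1 - 3*b3^2) = 0"
    using e13 assms(1,2) by simp
  have "3*(a1*(a2*X3+a3*X2) - b1^2) = 3*(a2*(a3*X1+a1*X3) - b2^2)" using k1 k2 z12 by linarith
  moreover have "3*(a1*(a2*X3+a3*X2) - b1^2) = 3*(a3*(a1*X2+a2*X1) - b3^2)" using k1 k3 z13 by linarith
  ultimately show ?thesis by simp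
qed
lemma comp: "c*(\<i>* of_real b*(\<i>* of_real b*E))*w + c*E*(w* of_real m) = of_real (m - b^2)*(c*E*w)"
  by (simp add: algebra_simps power2_eq_square)
lemma dd: fixes w1 w2 w3 :: complex shows "cnj w2 * w2 = of_real X2 \<Longrightarrow> cnj w3 * w3 = of_real X3 \<Longrightarrow>
  complex_of_real a1 * cnj (w2 * (complex_of_real a3 * cnj (w1 * w2)) + (complex_of_real a2 * cnj (w3 * w1)) * w3) = w1 * of_real (a1*(a2*X3+a3*X2))"
proof -
  assume h: "cnj w2 * w2 = of_real X2" "cnj w3 * w3 = of_real X3"
  have "complex_of_real a1 * cnj (w2 * (complex_of_real a3 * cnj (w1 * w2)) + (complex_of_real a2 * cnj (w3 * w1)) * w3)
    = of_real a1 * (of_real a3 * w1 * (cnj w2 * w2) + of_real a2 * w1 * (cnj w3 * w3))"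
    by (simp add: complex_cnj_mult algebra_simps)
  also have "\<dots> = w1 * of_real (a1*(a2*X3+a3*X2))" unfolding h by (simp add: algebra_simps)
  finally show ?thesis .
qed

theorem proposition8p3:
  fixes b1 b2 b3 :: real and w1 w2 w3 :: "real \<Rightarrow> complex"
  assumes "\<not> (b1 = 0 \<and> b2 = 0 \<and> b3 = 0)" and "b1 + b2 + b3 = 0"
    and "a1 = (b3 - b2) / sqrt 3" and "a2 = (b1 - b3) / sqrt 3" and "a3 = (b2 - b1) / sqrt 3"
    and "\<And>t. w1 t \<noteq> 0 \<and> w2 t \<noteq> 0 \<and> w3 t \<noteq> 0"
    and "\<And>t. (w1 has_vector_derivative (complex_of_real a1 * cnj (w2 t * w3 t))) (at t)"
    and "\<And>t. (w2 has_vector_derivative (complex_of_real a2 * cnj (w3 t * w1 t))) (at t)"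
    and "\<And>t. (w3 has_vector_derivative (complex_of_real a3 * cnj (w1 t * w2 t))) (at t)"
    and "\<And>t. (cmod (w1 t))\<^sup>2 + (cmod (w2 t))\<^sup>2 + (cmod (w3 t))\<^sup>2 = 3"
    and "\<And>t. b1 * (cmod (w1 t))\<^sup>2 + b2 * (cmod (w2 t))\<^sup>2 + b3 * (cmod (w3 t))\<^sup>2 = 0"
    and "\<And>s t. Phi s t = vector [complex_of_real (1 / sqrt 3) * exp (\<i> * complex_of_real (b1 * s)) * w1 t,
                                  complex_of_real (1 / sqrt 3) * exp (\<i> * complex_of_real (b2 * s)) * w2 t,
                                  complex_of_real (1 / sqrt 3) * exp (\<i> * complex_of_real (b3 * s)) * w3 t]"
  shows "conformal_map Phi \<and> harmonic_map_S5 Phi"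
proof -
  define c where "c = complex_of_real (1 / sqrt 3)"
  define E1 where "E1 = (\<lambda>s. exp (\<i> * complex_of_real (b1 * s)))"
  define E2 where "E2 = (\<lambda>s. exp (\<i> * complex_of_real (b2 * s)))"
  define E3 where "E3 = (\<lambda>s. exp (\<i> * complex_of_real (b3 * s)))"
  define d1 where "d1 = (\<lambda>t. complex_of_real a1 * cnj (w2 t * w3 t))"
  define d2 where "d2 = (\<lambda>t. complex_of_real a2 * cnj (w3 t * w1 t))"
  define d3 where "d3 = (\<lambda>t. complex_of_real a3 * cnj (w1 t * w2 t))"
  define dd1 where "dd1 = (\<lambda>t. complex_of_real a1 * cnj (w2 t * d3 t + d2 t * w3 t))"
  define dd2 where "dd2 = (\<lambda>t. complex_of_real a2 * cnj (w3 t * d1 t + d3 t * w1 t))"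
  define dd3 where "dd3 = (\<lambda>t. complex_of_real a3 * cnj (w1 t * d2 t + d1 t * w2 t))"
  have w1d: "\<And>t. (w1 has_vector_derivative d1 t) (at t)" using assms(7) by (simp add: d1_def)
  have w2d: "\<And>t. (w2 has_vector_derivative d2 t) (at t)" using assms(8) by (simp add: d2_def)
  have w3d: "\<And>t. (w3 has_vector_derivative d3 t) (at t)" using assms(9) by (simp add: d3_def)
  have d1d: "\<And>t. (d1 has_vector_derivative dd1 t) (at t)" unfolding d1_def dd1_def
    by (intro has_vector_derivative_mult_right has_vector_derivative_cnj has_vector_derivative_mult w2d w3d)
  have d2d: "\<And>t. (d2 has_vector_derivative dd2 t) (at t)" unfolding d2_def dd2_def
    by (intro has_vector_derivative_mult_right has_vector_derivative_cnj has_vector_derivative_mult w1d w3d)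
  have d3d: "\<And>t. (d3 has_vector_derivative dd3 t) (at t)" unfolding d3_def dd3_def
    by (intro has_vector_derivative_mult_right has_vector_derivative_cnj has_vector_derivative_mult w1d w2d)
  have E1d: "\<And>s. (E1 has_vector_derivative (\<i> * of_real b1 * E1 s)) (at s)" unfolding E1_def by (rule exp_deriv)
  have E2d: "\<And>s. (E2 has_vector_derivative (\<i> * of_real b2 * E2 s)) (at s)" unfolding E2_def by (rule exp_deriv)
  have E3d: "\<And>s. (E3 has_vector_derivative (\<i> * of_real b3 * E3 s)) (at s)" unfolding E3_def by (rule exp_deriv)
  have nE: "\<And>s. cmod (E1 s) = 1" "\<And>s. cmod (E2 s) = 1" "\<And>s. cmod (E3 s) = 1"
    by (simp_all add: E1_def E2_def E3_def)
  have Phi_eq: "Phi = (\<lambda>s t. vector [c * E1 s * w1 t, c * E2 s * w2 t, c * E3 s * w3 t])"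
    by (intro ext) (simp add: assms(12) c_def E1_def E2_def E3_def)
  define Fs where "Fs = (\<lambda>s t. vector [c * (\<i> * of_real b1 * E1 s) * w1 t, c * (\<i> * of_real b2 * E2 s) * w2 t,
     c * (\<i> * of_real b3 * E3 s) * w3 t] :: complex^3)"
  define Ft where "Ft = (\<lambda>s t. vector [c * E1 s * d1 t, c * E2 s * d2 t, c * E3 s * d3 t] :: complex^3)"
  define Fss where "Fss = (\<lambda>s t. vector [c * (\<i> * of_real b1 * (\<i> * of_real b1 * E1 s)) * w1 t,
     c * (\<i> * of_real b2 * (\<i> * of_real b2 * E2 s)) * w2 t,
     c * (\<i> * of_real b3 * (\<i> * of_real b3 * E3 s)) * w3 t] :: complex^3)"
  define Fst where "Fst = (\<lambda>s t. vector [c * (\<i> * of_real b1 * E1 s) * d1 t, c * (\<i> * of_real b2 * E2 s) * d2 t,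
     c * (\<i> * of_real b3 * E3 s) * d3 t] :: complex^3)"
  define Ftt where "Ftt = (\<lambda>s t. vector [c * E1 s * dd1 t, c * E2 s * dd2 t, c * E3 s * dd3 t] :: complex^3)"
  have hp1: "has_partials Phi Fs Ft"
    unfolding has_partials_def Phi_eq Fs_def Ft_def
    by (intro allI conjI vec3_deriv has_vector_derivative_mult_left has_vector_derivative_mult_right E1d E2d E3d w1d w2d w3d)
  have hp2: "has_partials Fs Fss Fst"
    unfolding has_partials_def Fss_def Fs_def Fst_def
    by (intro allI conjI vec3_deriv has_vector_derivative_mult_left has_vector_derivative_mult_right E1d E2d E3d w1d w2d w3d)
  have hp3: "has_partials Ft Fst Ftt"
    unfolding has_partials_def Ftt_def Ft_def Fst_def
    by (intro allI conjI vec3_deriv has_vector_derivative_mult_left has_vector_derivative_mult_right E1d E2d E3d d1d d2d d3d)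

  have cw1: "continuous_on UNIV w1" by (rule dcont, rule w1d)
  have cw2: "continuous_on UNIV w2" by (rule dcont, rule w2d)
  have cw3: "continuous_on UNIV w3" by (rule dcont, rule w3d)
  have cd1: "continuous_on UNIV d1" by (rule dcont, rule d1d)
  have cd2: "continuous_on UNIV d2" by (rule dcont, rule d2d)
  have cd3: "continuous_on UNIV d3" by (rule dcont, rule d3d)
  have cE1: "continuous_on UNIV E1" by (rule dcont, rule E1d)
  have cE2: "continuous_on UNIV E2" by (rule dcont, rule E2d)
  have cE3: "continuous_on UNIV E3" by (rule dcont, rule E3d)
  have cdd1: "continuous_on UNIV dd1" unfolding dd1_def by (intro continuous_intros cw1 cw2 cw3 cd1 cd2 cd3)
  have cdd2: "continuous_on UNIV dd2" unfolding dd2_def by (intro continuous_intros cw1 cw2 cw3 cd1 cd2 cd3)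
  have cdd3: "continuous_on UNIV dd3" unfolding dd3_def by (intro continuous_intros cw1 cw2 cw3 cd1 cd2 cd3)
  note cf = csnd[OF cw1] csnd[OF cw2] csnd[OF cw3] csnd[OF cd1] csnd[OF cd2] csnd[OF cd3]
    csnd[OF cdd1] csnd[OF cdd2] csnd[OF cdd3] cfst[OF cE1] cfst[OF cE2] cfst[OF cE3]
  have C: "\<And>F::real\<Rightarrow>real\<Rightarrow>complex^3. (\<lambda>(s,t). F s t) = (\<lambda>p. F (fst p) (snd p))" by auto
  have cont: "continuous_on UNIV (\<lambda>(s,t). Fs s t) \<and> continuous_on UNIV (\<lambda>(s,t). Ft s t) \<and>
      continuous_on UNIV (\<lambda>(s,t). Fss s t) \<and> continuous_on UNIV (\<lambda>(s,t). Fst s t) \<and>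
      continuous_on UNIV (\<lambda>(s,t). Fst s t) \<and> continuous_on UNIV (\<lambda>(s,t). Ftt s t)"
    unfolding C Fs_def Ft_def Fss_def Fst_def Ftt_def
    by (intro conjI vec3_cont continuous_intros cf)
  define x1 where "x1 = (\<lambda>t. (cmod (w1 t))\<^sup>2)"
  define x2 where "x2 = (\<lambda>t. (cmod (w2 t))\<^sup>2)"
  define x3 where "x3 = (\<lambda>t. (cmod (w3 t))\<^sup>2)"
  have S3: "\<And>t. x1 t + x2 t + x3 t = 3" using assms(10) by (simp add: x1_def x2_def x3_def)
  have g0: "\<And>t. b1 * x1 t + b2 * x2 t + b3 * x3 t = 0" using assms(11) by (simp add: x1_def x2_def x3_def)
  have r3: "sqrt 3 * sqrt 3 = (3::real)" by simp
  have ra1: "sqrt 3 * a1 = b3 - b2" using assms(3) by simp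
  have ra2: "sqrt 3 * a2 = b1 - b3" using assms(4) by simp
  have ra3: "sqrt 3 * a3 = b2 - b1" using assms(5) by simp
  have ba0: "b1*a1+b2*a2+b3*a3 = 0"
  proof -
    have "sqrt 3 * (b1*a1+b2*a2+b3*a3) = b1*(sqrt 3 * a1)+b2*(sqrt 3 * a2)+b3*(sqrt 3*a3)" by (simp add: algebra_simps)
    also have "\<dots> = 0" unfolding ra1 ra2 ra3 by (simp add: algebra_simps)
    finally show ?thesis by simp
  qed
  have conf: "conformal_map Phi"
    unfolding conformal_map_def
  proof (intro exI conjI allI)
    show "has_partials Phi Fs Ft" by (rule hp1)
    fix s t
    have "inner (Fs s t) (Ft s t) = Re (- \<i> * of_real b1 * (cnj (w1 t) * d1 t) / 3) + Re (- \<i> * of_real b2 * (cnj (w2 t) * d2 t) / 3)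
       + Re (- \<i> * of_real b3 * (cnj (w3 t) * d3 t) / 3)"
      unfolding Fs_def Ft_def inner_vec3 c_def by (simp only: t1 nE)
    also have "\<dots> = Re (- \<i> * of_real b1 * (cnj (w1 t) * d1 t) / 3 + - \<i> * of_real b2 * (cnj (w2 t) * d2 t) / 3
       + - \<i> * of_real b3 * (cnj (w3 t) * d3 t) / 3)" by simp
    also have "- \<i> * of_real b1 * (cnj (w1 t) * d1 t) / 3 + - \<i> * of_real b2 * (cnj (w2 t) * d2 t) / 3
       + - \<i> * of_real b3 * (cnj (w3 t) * d3 t) / 3 = - \<i> * of_real (b1*a1+b2*a2+b3*a3) * cnj (w1 t * w2 t * w3 t) / 3"
      by (simp add: d1_def d2_def d3_def complex_cnj_mult algebra_simps)
    finally show "inner (Fs s t) (Ft s t) = 0" by (simp add: ba0)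
    have "(norm (Fs s t))\<^sup>2 = b1^2 * x1 t / 3 + b2^2 * x2 t / 3 + b3^2 * x3 t / 3"
      unfolding Fs_def norm_vec3_sq c_def x1_def x2_def x3_def by (simp only: n1 nE)
    also have "\<dots> = ((b3-b2)^2*x2 t*x3 t + (b1-b3)^2*x3 t*x1 t + (b2-b1)^2*x1 t*x2 t) / 9"
      using alg1[OF S3 g0, of t] by (simp add: mult.commute)
    also have "\<dots> = (cmod (d1 t))\<^sup>2 / 3 + (cmod (d2 t))\<^sup>2 / 3 + (cmod (d3 t))\<^sup>2 / 3"
    proof -
      have "(cmod (d1 t))\<^sup>2 = a1^2 * x2 t * x3 t" "(cmod (d2 t))\<^sup>2 = a2^2 * x3 t * x1 t" "(cmod (d3 t))\<^sup>2 = a3^2 * x1 t * x2 t"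
        by (simp_all add: d1_def d2_def d3_def x1_def x2_def x3_def norm_mult power_mult_distrib)
      moreover have "a1^2 = (b3-b2)^2/3" "a2^2 = (b1-b3)^2/3" "a3^2 = (b2-b1)^2/3"
        by (simp_all add: assms(3-5) power_divide)
      ultimately show ?thesis by (simp add: field_simps)
    qed
    also have "\<dots> = (norm (Ft s t))\<^sup>2"
      unfolding Ft_def norm_vec3_sq c_def by (simp only: n2 nE)
    finally show "norm (Fs s t) = norm (Ft s t)" by (metis norm_ge_zero power2_eq_imp_eq)
  qed
  have nPhi: "\<And>s t. norm (Phi s t) = 1"
  proof -
    fix s t
    have "(norm (Phi s t))\<^sup>2 = x1 t / 3 + x2 t / 3 + x3 t / 3"
      unfolding Phi_eq norm_vec3_sq c_def x1_def x2_def x3_def by (simp only: n2 nE)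
    also have "\<dots> = 1" using S3[of t] by simp
    finally show "norm (Phi s t) = 1" by (metis norm_ge_zero power2_eq_imp_eq power_one zero_le_one)
  qed
  have harm: "\<And>s t. let L = Fss s t + Ftt s t in L - inner L (Phi s t) *\<^sub>R Phi s t = 0"
  proof -
    fix s t
    define m1 where "m1 = a1*(a2*x3 t+a3*x2 t)"
    define m2 where "m2 = a2*(a3*x1 t+a1*x3 t)"
    define m3 where "m3 = a3*(a1*x2 t+a2*x1 t)"
    have mm: "m1 - b1^2 = m2 - b2^2 \<and> m1 - b1^2 = m3 - b3^2"
      unfolding m1_def m2_def m3_def by (rule alg2[OF S3 g0 assms(2) r3 ra1 ra2 ra3])
    have cc: "\<And>w::complex. cnj w * w = of_real ((cmod w)\<^sup>2)" using complex_norm_square by (metis mult.commute)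
    have e1: "dd1 t = w1 t * of_real m1" unfolding dd1_def d2_def d3_def m1_def x2_def x3_def
      by (rule dd) (rule cc)+
    have e2: "dd2 t = w2 t * of_real m2" unfolding dd2_def d1_def d3_def m2_def x1_def x3_def
      by (rule dd) (rule cc)+
    have e3: "dd3 t = w3 t * of_real m3" unfolding dd3_def d1_def d2_def m3_def x1_def x2_def
      by (rule dd) (rule cc)+
    have L: "Fss s t + Ftt s t = (m1 - b1^2) *\<^sub>R Phi s t"
      unfolding Fss_def Ftt_def Phi_eq vec_eq_iff forall_3
      using mm
      by (simp only: vector_add_component vector_3 vector_scaleR_component e1 e2 e3 comp mm[THEN conjunct1, symmetric] mm[THEN conjunct2, symmetric])
         (simp add: scaleR_conv_of_real)
    have "inner (Fss s t + Ftt s t) (Phi s t) = m1 - b1^2"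
      unfolding L using nPhi[of s t] by (simp add: power2_norm_eq_inner[symmetric])
    then show "let L = Fss s t + Ftt s t in L - inner L (Phi s t) *\<^sub>R Phi s t = 0"
      by (simp add: L)
  qed
  have "harmonic_map_S5 Phi"
    unfolding harmonic_map_S5_def
    using nPhi hp1 hp2 hp3 cont harm by blast
  with conf show ?thesis by simp
qed

end
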